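(* Let $G$ be a graph of order $n\ge 4$. Then $\tau(G)=n-2$ if and only if $G$ is isomorphic to one of: (a) the complete split graph $K_{n-2}\vee\overline{K_2}$; (b) $K_1\vee(K_1+K_{n-2})$; (c) the complete bipartite graph $K_{2,n-2}$; (d) $\overline{K_{n-2}}\vee K_2$.
   Context: Graphs are finite, simple, connected. $+$ denotes disjoint union, $\vee$ the join, $\overline{H}$ the complement. Two vertices $u,v$ are twins if $N(u)\setminus\{v\}=N(v)\setminus\{u\}$; the twin number $\tau(G)$ is the maximum cardinality of an equivalence class of the twin relation. *)

theory Defs
  imports Main
begin

definition simple_graph :: "'a set \<Rightarrow> ('a \<Rightarrow> 'a \<Rightarrow> bool) \<Rightarrow> bool" where
  "simple_graph V E \<longleftrightarrow> finite V \<and> V \<noteq> {} \<and>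
     (\<forall>u v. E u v \<longrightarrow> u \<in> V \<and> v \<in> V) \<and>
     (\<forall>u v. E u v \<longrightarrow> E v u) \<and> (\<forall>u. \<not> E u u)"

definition connected_graph :: "'a set \<Rightarrow> ('a \<Rightarrow> 'a \<Rightarrow> bool) \<Rightarrow> bool" where
  "connected_graph V E \<longleftrightarrow> simple_graph V E \<and> (\<forall>u\<in>V. \<forall>v\<in>V. E\<^sup>*\<^sup>* u v)"

definition nbhd :: "'a set \<Rightarrow> ('a \<Rightarrow> 'a \<Rightarrow> bool) \<Rightarrow> 'a \<Rightarrow> 'a set" where
  "nbhd V E u = {w \<in> V. E u w}"

definition twins :: "'a set \<Rightarrow> ('a \<Rightarrow> 'a \<Rightarrow> bool) \<Rightarrow> 'a \<Rightarrow> 'a \<Rightarrow> bool" where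
  "twins V E u v \<longleftrightarrow> nbhd V E u - {v} = nbhd V E v - {u}"

definition twin_class :: "'a set \<Rightarrow> ('a \<Rightarrow> 'a \<Rightarrow> bool) \<Rightarrow> 'a \<Rightarrow> 'a set" where
  "twin_class V E v = {u \<in> V. twins V E u v}"

definition twin_number :: "'a set \<Rightarrow> ('a \<Rightarrow> 'a \<Rightarrow> bool) \<Rightarrow> nat" where
  "twin_number V E = Max ((\<lambda>v. card (twin_class V E v)) ` V)"

definition graph_iso :: "'a set \<Rightarrow> ('a \<Rightarrow> 'a \<Rightarrow> bool) \<Rightarrow> 'b set \<Rightarrow> ('b \<Rightarrow> 'b \<Rightarrow> bool) \<Rightarrow> bool" where
  "graph_iso V E W F \<longleftrightarrow> (\<exists>f. bij_betw f V W \<and> (\<forall>u\<in>V. \<forall>v\<in>V. E u v \<longleftrightarrow> F (f u) (f v)))"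

(* K_{n-2} join complement K_2 : {0,1} independent, rest a clique, all joined *)
definition complete_split :: "nat \<Rightarrow> nat \<Rightarrow> nat \<Rightarrow> bool" where
  "complete_split n i j \<longleftrightarrow> i < n \<and> j < n \<and> i \<noteq> j \<and> \<not> (i < 2 \<and> j < 2)"

(* K_1 join (K_1 + K_{n-2}) : 0 universal, 1 only adjacent to 0, {2..n-1} clique *)
definition k1_join_k1_plus_k :: "nat \<Rightarrow> nat \<Rightarrow> nat \<Rightarrow> bool" where
  "k1_join_k1_plus_k n i j \<longleftrightarrow> i < n \<and> j < n \<and> i \<noteq> j \<and>
      (i = 0 \<or> j = 0 \<or> (2 \<le> i \<and> 2 \<le> j))"

(* K_{2,n-2} : parts {0,1} and {2..n-1} *)
definition complete_bip_2 :: "nat \<Rightarrow> nat \<Rightarrow> nat \<Rightarrow> bool" where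
  "complete_bip_2 n i j \<longleftrightarrow> i < n \<and> j < n \<and> ((i < 2) \<noteq> (j < 2))"

(* complement K_{n-2} join K_2 : {0,1} adjacent, {2..n-1} independent, all joined *)
definition empty_join_k2 :: "nat \<Rightarrow> nat \<Rightarrow> nat \<Rightarrow> bool" where
  "empty_join_k2 n i j \<longleftrightarrow> i < n \<and> j < n \<and> i \<noteq> j \<and> (i < 2 \<or> j < 2)"

end

theory Submission imports Defs begin
definition struct :: "'a set \<Rightarrow> ('a \<Rightarrow> 'a \<Rightarrow> bool) \<Rightarrow> 'a \<Rightarrow> 'a \<Rightarrow> bool \<Rightarrow> bool \<Rightarrow> bool \<Rightarrow> bool \<Rightarrow> bool" where
 "struct V E x y c a b e \<longleftrightarrow> x \<in> V \<and> y \<in> V \<and> x \<noteq> y \<and>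
   (\<forall>t\<in>V-{x,y}. \<forall>t'\<in>V-{x,y}. t \<noteq> t' \<longrightarrow> E t t' = c) \<and>
   (\<forall>t\<in>V-{x,y}. E x t = a \<and> E t x = a \<and> E y t = b \<and> E t y = b) \<and>
   E x y = e \<and> E y x = e \<and> (\<forall>u. \<not> E u u) \<and> (\<forall>u v. E u v \<longrightarrow> u \<in> V \<and> v \<in> V)"

lemma structD:
  assumes "struct V E x y c a b e"
  shows "x \<in> V" "y \<in> V" "x \<noteq> y"
    "\<And>t t'. t \<in> V \<Longrightarrow> t \<noteq> x \<Longrightarrow> t \<noteq> y \<Longrightarrow> t' \<in> V \<Longrightarrow> t' \<noteq> x \<Longrightarrow> t' \<noteq> y \<Longrightarrow> t \<noteq> t' \<Longrightarrow> E t t' = c"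
    "\<And>t. t \<in> V \<Longrightarrow> t \<noteq> x \<Longrightarrow> t \<noteq> y \<Longrightarrow> E x t = a"
    "\<And>t. t \<in> V \<Longrightarrow> t \<noteq> x \<Longrightarrow> t \<noteq> y \<Longrightarrow> E t x = a"
    "\<And>t. t \<in> V \<Longrightarrow> t \<noteq> x \<Longrightarrow> t \<noteq> y \<Longrightarrow> E y t = b"
    "\<And>t. t \<in> V \<Longrightarrow> t \<noteq> x \<Longrightarrow> t \<noteq> y \<Longrightarrow> E t y = b"
    "E x y = e" "E y x = e" "\<And>u. \<not> E u u" "\<And>u v. E u v \<Longrightarrow> u \<in> V" "\<And>u v. E u v \<Longrightarrow> v \<in> V"
  using assms unfolding struct_def by blast+
lemma twins_iff:
  assumes "\<not> E u u" "\<not> E v v"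
  shows "twins V E u v \<longleftrightarrow> (\<forall>z\<in>V. z \<noteq> u \<and> z \<noteq> v \<longrightarrow> (E u z \<longleftrightarrow> E v z))"
proof -
  have "nbhd V E u - {v} = nbhd V E v - {u} \<longleftrightarrow> (\<forall>z. (z \<in> nbhd V E u - {v}) = (z \<in> nbhd V E v - {u}))"
    by blast
  also have "\<dots> \<longleftrightarrow> (\<forall>z\<in>V. z \<noteq> u \<and> z \<noteq> v \<longrightarrow> (E u z \<longleftrightarrow> E v z))"
    unfolding nbhd_def using assms by auto
  finally show ?thesis unfolding twins_def .
qed

lemma two_elems:
  assumes "finite A" "card A \<ge> 2" "t \<in> A"
  obtains t2 where "t2 \<in> A" "t2 \<noteq> t"
proof -
  have "A - {t} \<noteq> {}"
  proof
    assume "A - {t} = {}"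
    then have "A \<subseteq> {t}" by blast
    then have "card A \<le> 1" using card_mono[of "{t}" A] by simp
    with assms show False by simp
  qed
  then show ?thesis using that by blast
qed

lemma struct_class_T:
  assumes S: "struct V E x y c a b e" and fin: "finite V" and c4: "card V \<ge> 4"
    and n1: "\<not>(a = c \<and> e = b)" and n2: "\<not>(b = c \<and> e = a)"
    and t: "t \<in> V - {x,y}"
  shows "twin_class V E t = V - {x,y}"
proof -
  note D = structD[OF S]
  have cT: "card (V - {x,y}) \<ge> 2" using c4 fin D(1-3) by (simp add: card_Diff_subset)
  obtain t2 where t2: "t2 \<in> V - {x,y}" "t2 \<noteq> t"
    using two_elems[OF _ cT t] fin by blast
  show ?thesis
  proof (intro set_eqI iffI)
    fix u assume "u \<in> twin_class V E t"
    then have uV: "u \<in> V" and tw: "twins V E u t" by (auto simp: twin_class_def)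
    show "u \<in> V - {x,y}"
    proof (rule ccontr)
      assume "u \<notin> V - {x,y}"
      with uV have "u = x \<or> u = y" by blast
      then show False
      proof
        assume ux: "u = x"
        from tw have H: "\<forall>z\<in>V. z \<noteq> x \<and> z \<noteq> t \<longrightarrow> (E x z \<longleftrightarrow> E t z)"
          using ux twins_iff[of E x t V] D(11) by simp
        show False
        proof (cases "a = c")
          case True
          with n1 have "e \<noteq> b" by blast
          moreover have "E t y = b" using D(8) t by simp
          ultimately show False using H D(2,3,9) t by auto
        next
          case False
          have "E x t2 = a" "E t t2 = c" using D(5)[of t2] D(4)[of t t2] t t2 by auto
          then show False using H t2 False by auto
        qed
      next
        assume uy: "u = y"
        from tw have H: "\<forall>z\<in>V. z \<noteq> y \<and> z \<noteq> t \<longrightarrow> (E y z \<longleftrightarrow> E t z)"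
          using uy twins_iff[of E y t V] D(11) by simp
        show False
        proof (cases "b = c")
          case True
          with n2 have "e \<noteq> a" by blast
          moreover have "E t x = a" using D(6) t by simp
          ultimately show False using H D(1,3,10) t by auto
        next
          case False
          have "E y t2 = b" "E t t2 = c" using D(7)[of t2] D(4)[of t t2] t t2 by auto
          then show False using H t2 False by auto
        qed
      qed
    qed
  next
    fix u assume u: "u \<in> V - {x,y}"
    have "twins V E u t"
      unfolding twins_iff[of E u t V, OF D(11) D(11)]
    proof (intro ballI impI)
      fix z assume z: "z \<in> V" "z \<noteq> u \<and> z \<noteq> t"
      show "E u z \<longleftrightarrow> E t z"
      proof (cases "z = x")
        case True then show ?thesis using D(6) u t by simp
      next
        case False
        show ?thesis
        proof (cases "z = y")
          case True then show ?thesis using D(8) u t by simp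
        next
          case False2: False
          then show ?thesis using D(4)[of u z] D(4)[of t z] u t z False by auto
        qed
      qed
    qed
    then show "u \<in> twin_class V E t" using u by (auto simp: twin_class_def)
  qed
qed

lemma twins_sym: "twins V E u v \<Longrightarrow> twins V E v u"
  unfolding twins_def by simp

lemma struct_twin_number:
  assumes S: "struct V E x y c a b e" and fin: "finite V" and c4: "card V \<ge> 4"
    and n1: "\<not>(a = c \<and> e = b)" and n2: "\<not>(b = c \<and> e = a)"
  shows "twin_number V E = card V - 2"
proof -
  note D = structD[OF S]
  have cT: "card (V - {x,y}) = card V - 2" using fin D(1-3) by (simp add: card_Diff_subset)
  have "V - {x,y} \<noteq> {}"
  proof
    assume "V - {x,y} = {}"
    then have "card (V-{x,y}) = 0" by (metis card.empty)
    with cT c4 show False by simp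
  qed
  then obtain t where t: "t \<in> V - {x,y}" by blast
  have le: "card (twin_class V E v) \<le> card V - 2" if v: "v \<in> V" for v
  proof (cases "v \<in> V - {x,y}")
    case True
    then show ?thesis using struct_class_T[OF S fin c4 n1 n2 True] cT by simp
  next
    case False
    have "twin_class V E v \<subseteq> {x,y}"
    proof
      fix u assume u: "u \<in> twin_class V E v"
      show "u \<in> {x,y}"
      proof (rule ccontr)
        assume "u \<notin> {x,y}"
        then have uT: "u \<in> V - {x,y}" using u by (auto simp: twin_class_def)
        have "twins V E u v" using u by (simp add: twin_class_def)
        then have "twins V E v u" by (rule twins_sym)
        then have "v \<in> twin_class V E u" using v by (auto simp: twin_class_def)
        then show False using struct_class_T[OF S fin c4 n1 n2 uT] False by simp
      qed
    qed
    then have "card (twin_class V E v) \<le> card {x,y}" by (intro card_mono) auto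
    also have "\<dots> \<le> 2" by (simp add: card_insert_if)
    finally show ?thesis using c4 by simp
  qed
  show ?thesis unfolding twin_number_def
  proof (rule Max_eqI)
    show "finite ((\<lambda>v. card (twin_class V E v)) ` V)" using fin by simp
    show "\<And>z. z \<in> (\<lambda>v. card (twin_class V E v)) ` V \<Longrightarrow> z \<le> card V - 2" using le by blast
    show "card V - 2 \<in> (\<lambda>v. card (twin_class V E v)) ` V"
    proof -
      have "card (twin_class V E t) = card V - 2" using struct_class_T[OF S fin c4 n1 n2 t] cT by simp
      moreover have "t \<in> V" using t by blast
      ultimately show ?thesis by (metis image_eqI)
    qed
  qed
qed

lemma struct_swap: assumes "struct V E x y c a b e" shows "struct V E y x c b a e"
proof -
  have eq: "V-{y,x} = V-{x,y}" by blast
  from assms show ?thesis unfolding struct_def eq by blast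
qed

lemma struct_transfer:
  assumes iso: "graph_iso V E W F" and S: "struct W F x' y' c a b e" and G: "simple_graph V E"
  shows "\<exists>x y. struct V E x y c a b e"
proof -
  obtain f where bij: "bij_betw f V W" and pres: "\<And>u v. u \<in> V \<Longrightarrow> v \<in> V \<Longrightarrow> E u v \<longleftrightarrow> F (f u) (f v)"
    using iso unfolding graph_iso_def by blast
  note D = structD[OF S]
  define x where "x = inv_into V f x'"
  define y where "y = inv_into V f y'"
  have xV: "x \<in> V" and fx: "f x = x'" using D(1) bij unfolding x_def
    by (auto simp: bij_betw_def inv_into_into f_inv_into_f)
  have yV: "y \<in> V" and fy: "f y = y'" using D(2) bij unfolding y_def
    by (auto simp: bij_betw_def inv_into_into f_inv_into_f)
  have inj: "inj_on f V" and img: "f ` V = W" using bij by (auto simp: bij_betw_def)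
  have xy: "x \<noteq> y" using fx fy D(3) by auto
  have fT: "f t \<in> W" "f t \<noteq> x'" "f t \<noteq> y'" if "t \<in> V" "t \<noteq> x" "t \<noteq> y" for t
    using that img inj xV yV fx fy by (auto simp: inj_on_def)
  have irr: "\<And>u. \<not> E u u" and supp: "\<And>u v. E u v \<Longrightarrow> u \<in> V \<and> v \<in> V"
    using G unfolding simple_graph_def by blast+
  have "struct V E x y c a b e"
    unfolding struct_def
  proof (intro conjI ballI impI allI)
    show "x \<in> V" "y \<in> V" "x \<noteq> y" by fact+
  next
    fix t t' assume t: "t \<in> V - {x,y}" and t': "t' \<in> V - {x,y}" and ne: "t \<noteq> t'"
    have "f t \<noteq> f t'" using ne inj t t' by (auto simp: inj_on_def)
    then show "E t t' = c" using pres[of t t'] D(4)[of "f t" "f t'"] fT[of t] fT[of t'] t t' by auto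
  next
    fix t assume t: "t \<in> V - {x,y}"
    then have tV: "t \<in> V" "t \<noteq> x" "t \<noteq> y" by auto
    show "E x t = a" using pres[OF xV tV(1)] fx D(5)[OF fT[OF tV]] by simp
    show "E t x = a" using pres[OF tV(1) xV] fx D(6)[OF fT[OF tV]] by simp
    show "E y t = b" using pres[OF yV tV(1)] fy D(7)[OF fT[OF tV]] by simp
    show "E t y = b" using pres[OF tV(1) yV] fy D(8)[OF fT[OF tV]] by simp
  next
    show "E x y = e" using pres[OF xV yV] fx fy D(9) by simp
    show "E y x = e" using pres[OF yV xV] fx fy D(10) by simp
  next
    fix u show "\<not> E u u" by (rule irr)
  next
    fix u v assume "E u v" then show "u \<in> V" "v \<in> V" using supp by blast+
  qed
  then show ?thesis by blast
qed

lemma struct_iso: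
  assumes S: "struct V E x y c a b e" and S': "struct W F x' y' c a b e"
    and fin: "finite V" "finite W" and cd: "card V = card W"
  shows "graph_iso V E W F"
proof -
  note D = structD[OF S] and D' = structD[OF S']
  have "card (V - {x,y}) = card (W - {x',y'})"
    using fin cd D(1-3) D'(1-3) by (simp add: card_Diff_subset)
  then obtain g where g: "bij_betw g (V - {x,y}) (W - {x',y'})"
    using finite_same_card_bij fin by blast
  define f where "f z = (if z = x then x' else if z = y then y' else g z)" for z
  have gT: "g t \<in> W" "g t \<noteq> x'" "g t \<noteq> y'" if "t \<in> V" "t \<noteq> x" "t \<noteq> y" for t
    using g that unfolding bij_betw_def by auto
  have ginj: "g t = g t' \<Longrightarrow> t = t'" if "t \<in> V" "t \<noteq> x" "t \<noteq> y" "t' \<in> V" "t' \<noteq> x" "t' \<noteq> y" for t t'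
    using g that unfolding bij_betw_def inj_on_def by blast
  have gsurj: "\<exists>t\<in>V. t \<noteq> x \<and> t \<noteq> y \<and> g t = w" if "w \<in> W" "w \<noteq> x'" "w \<noteq> y'" for w
  proof -
    have "w \<in> g ` (V - {x,y})" using g that unfolding bij_betw_def by auto
    then show ?thesis by blast
  qed
  have bij: "bij_betw f V W"
    unfolding bij_betw_def
  proof
    show "inj_on f V"
    proof (rule inj_onI)
      fix u v assume u: "u \<in> V" and v: "v \<in> V" and eq: "f u = f v"
      show "u = v"
        using eq D(3) D'(3) gT[OF u] gT[OF v] ginj[OF u _ _ v] unfolding f_def
        by (auto split: if_splits)
    qed
    show "f ` V = W"
    proof
      show "f ` V \<subseteq> W" using gT D'(1,2) unfolding f_def by auto
      show "W \<subseteq> f ` V"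
      proof
        fix w assume w: "w \<in> W"
        show "w \<in> f ` V"
        proof (cases "w = x'")
          case True then show ?thesis using D(1) unfolding f_def by (auto intro!: image_eqI[of _ _ x])
        next
          case False
          show ?thesis
          proof (cases "w = y'")
            case True then show ?thesis using D(2,3) unfolding f_def by (auto intro!: image_eqI[of _ _ y])
          next
            case False2: False
            obtain t where "t \<in> V" "t \<noteq> x" "t \<noteq> y" "g t = w" using gsurj[OF w False False2] by blast
            then show ?thesis unfolding f_def by (auto intro!: image_eqI[of _ _ t])
          qed
        qed
      qed
    qed
  qed
  have pres: "E u v \<longleftrightarrow> F (f u) (f v)" if u: "u \<in> V" and v: "v \<in> V" for u v
  proof -
    consider "u = x" | "u = y" | "u \<noteq> x" "u \<noteq> y" by blast
    then show ?thesis
    proof cases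
      case 1
      consider "v = x" | "v = y" | "v \<noteq> x" "v \<noteq> y" by blast
      then show ?thesis
      proof cases
        case 1 then show ?thesis using \<open>u = x\<close> D(11) D'(11) by simp
      next
        case 2 then show ?thesis using \<open>u = x\<close> D(3,9) D'(9) unfolding f_def by simp
      next
        case 3 then show ?thesis using \<open>u = x\<close> D(5)[OF v 3] D'(5)[OF gT[OF v 3]] unfolding f_def by simp
      qed
    next
      case 2
      consider "v = x" | "v = y" | "v \<noteq> x" "v \<noteq> y" by blast
      then show ?thesis
      proof cases
        case 1 then show ?thesis using \<open>u = y\<close> D(3,10) D'(10) unfolding f_def by simp
      next
        case 2 then show ?thesis using \<open>u = y\<close> D(11) D'(11) by simp
      next
        case 3 then show ?thesis using \<open>u = y\<close> D(3) D(7)[OF v 3] D'(7)[OF gT[OF v 3]] unfolding f_def by simp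
      qed
    next
      case 3
      have fu: "f u = g u" using 3 unfolding f_def by simp
      consider "v = x" | "v = y" | "v \<noteq> x" "v \<noteq> y" by blast
      then show ?thesis
      proof cases
        case 1 then show ?thesis using fu D(6)[OF u 3] D'(6)[OF gT[OF u 3]] unfolding f_def by simp
      next
        case 2 then show ?thesis using fu D(3) D(8)[OF u 3] D'(8)[OF gT[OF u 3]] unfolding f_def by simp
      next
        case 4: 3
        have fv: "f v = g v" using 4 unfolding f_def by simp
        show ?thesis
        proof (cases "u = v")
          case True then show ?thesis using D(11) D'(11) by simp
        next
          case False
          then have "g u \<noteq> g v" using ginj[OF u 3 v 4] by blast
          then show ?thesis using fu fv D(4)[OF u 3 v 4 False] D'(4)[OF gT[OF u 3] gT[OF v 4]] by simp
        qed
      qed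
    qed
  qed
  show ?thesis unfolding graph_iso_def using bij pres by blast
qed

lemma m1: "n \<ge> 2 \<Longrightarrow> struct {0..<n} (complete_split n) 0 1 True True True False"
  unfolding struct_def complete_split_def by auto
lemma m2: "n \<ge> 2 \<Longrightarrow> struct {0..<n} (k1_join_k1_plus_k n) 0 1 True True False True"
  unfolding struct_def k1_join_k1_plus_k_def by auto
lemma m3: "n \<ge> 2 \<Longrightarrow> struct {0..<n} (complete_bip_2 n) 0 1 False True True False"
  unfolding struct_def complete_bip_2_def by auto
lemma m4: "n \<ge> 2 \<Longrightarrow> struct {0..<n} (empty_join_k2 n) 0 1 False True True True"
  unfolding struct_def empty_join_k2_def by auto


lemma twins_trans:
  assumes sym: "\<And>u v. E u v \<Longrightarrow> E v u" and irr: "\<And>u. \<not> E u u"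
    and uv: "twins V E u v" and vw: "twins V E v w" and V: "u \<in> V" "v \<in> V" "w \<in> V"
  shows "twins V E u w"
proof -
  have H1: "\<And>z. z \<in> V \<Longrightarrow> z \<noteq> u \<Longrightarrow> z \<noteq> v \<Longrightarrow> E u z \<longleftrightarrow> E v z"
    using uv twins_iff[of E u v V] irr by simp
  have H2: "\<And>z. z \<in> V \<Longrightarrow> z \<noteq> v \<Longrightarrow> z \<noteq> w \<Longrightarrow> E v z \<longleftrightarrow> E w z"
    using vw twins_iff[of E v w V] irr by simp
  have "\<forall>z\<in>V. z \<noteq> u \<and> z \<noteq> w \<longrightarrow> (E u z \<longleftrightarrow> E w z)"
  proof (intro ballI impI)
    fix z assume z: "z \<in> V" "z \<noteq> u \<and> z \<noteq> w"
    show "E u z \<longleftrightarrow> E w z"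
    proof (cases "u = v \<or> v = w \<or> u = w")
      case True
      then show ?thesis using H1 H2 z by auto
    next
      case False
      show ?thesis
      proof (cases "z = v")
        case False2: False
        then show ?thesis using H1[OF z(1)] H2[OF z(1)] z by blast
      next
        case True
        have a1: "E u w \<longleftrightarrow> E v w" using H1[OF V(3)] False by blast
        have a2: "E v u \<longleftrightarrow> E w u" using H2[OF V(1)] False by blast
        have "E u v \<longleftrightarrow> E w v" using a1 a2 sym by blast
        then show ?thesis using True by simp
      qed
    qed
  qed
  then show ?thesis using twins_iff[of E u w V] irr by simp
qed

lemma char:
  assumes C: "connected_graph V E" and n: "card V = n" and n4: "n \<ge> 4"
    and tn: "twin_number V E = n - 2"
  shows "\<exists>x y c a b e. struct V E x y c a b e \<and> \<not>(a = c \<and> e = b) \<and> \<not>(b = c \<and> e = a)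
           \<and> (a \<or> b) \<and> (a \<or> e) \<and> (b \<or> e)"
proof -
  have G: "simple_graph V E" and conn: "\<And>u v. u \<in> V \<Longrightarrow> v \<in> V \<Longrightarrow> E\<^sup>*\<^sup>* u v"
    using C unfolding connected_graph_def by auto
  have fin: "finite V" and ne: "V \<noteq> {}" and supp: "\<And>u v. E u v \<Longrightarrow> u \<in> V \<and> v \<in> V"
    and sym: "\<And>u v. E u v \<Longrightarrow> E v u" and irr: "\<And>u. \<not> E u u"
    using G unfolding simple_graph_def by blast+
  have "Max ((\<lambda>v. card (twin_class V E v)) ` V) \<in> (\<lambda>v. card (twin_class V E v)) ` V"
    using fin ne by (intro Max_in) auto
  then obtain v where vV: "v \<in> V" and cv: "card (twin_class V E v) = n - 2"
    using tn unfolding twin_number_def by auto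
  define T where "T = twin_class V E v"
  have TV: "T \<subseteq> V" unfolding T_def twin_class_def by auto
  have vT: "v \<in> T" unfolding T_def twin_class_def twins_def using vV by simp
  have cT: "card T = n - 2" using cv T_def by simp
  have "card (V - T) = 2" using card_Diff_subset[OF finite_subset[OF TV fin] TV] cT n n4 by simp
  then obtain x y where xy: "x \<noteq> y" and VT: "V - T = {x,y}" by (auto simp: card_2_iff)
  have xV: "x \<in> V" "x \<notin> T" "y \<in> V" "y \<notin> T" using VT by auto
  have Teq: "V - {x,y} = T" using VT TV by auto
  have twT: "twins V E u w" if "u \<in> T" "w \<in> T" for u w
  proof -
    have "twins V E u v" using that(1) unfolding T_def twin_class_def by simp
    moreover have "twins V E v w" using that(2) twins_sym unfolding T_def twin_class_def by auto
    ultimately show ?thesis using twins_trans[of E V u v w, OF sym irr] that TV vV by blast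
  qed
  have H: "E u z \<longleftrightarrow> E w z" if "u \<in> T" "w \<in> T" "z \<in> V" "z \<noteq> u" "z \<noteq> w" for u w z
    using twT[OF that(1,2)] twins_iff[of E u w V] irr that(3-5) by simp
  have "card T \<ge> 2" using cT n4 by simp
  then obtain t1 where t1: "t1 \<in> T" "t1 \<noteq> v" using two_elems[OF finite_subset[OF TV fin] _ vT] by blast
  define c where "c = E v t1"
  define a where "a = E x v"
  define b where "b = E y v"
  define e where "e = E x y"
  have step: "E s s' = E r s'" if "s \<in> T" "s' \<in> T" "r \<in> T" "s \<noteq> s'" "r \<noteq> s'" for s s' r
  proof (cases "r = s")
    case True then show ?thesis by simp
  next
    case False then show ?thesis using H[of s r s'] that TV by blast
  qed
  have cc: "E s s' = c" if "s \<in> T" "s' \<in> T" "s \<noteq> s'" for s s'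
  proof -
    have "E s s' = E t1 s'" if "s' \<noteq> t1" using step[of s s' t1] that \<open>s \<in> T\<close> \<open>s' \<in> T\<close> \<open>s \<noteq> s'\<close> t1 by blast
    have e1: "E s s' = E s' s" using sym by blast
    have e2: "E s' s = E v s" if "s \<noteq> v" using step[of s' s v] that \<open>s \<in> T\<close> \<open>s' \<in> T\<close> \<open>s \<noteq> s'\<close> vT by blast
    have e3: "E v s = E v t1" if "s \<noteq> v"
    proof -
      have "E v s = E s v" using sym by blast
      also have "\<dots> = E t1 v" using step[of s v t1] that \<open>s \<in> T\<close> vT t1 by blast
      also have "\<dots> = E v t1" using sym by blast
      finally show ?thesis .
    qed
    show ?thesis
    proof (cases "s = v")
      case False then show ?thesis using e1 e2 e3 c_def by simp
    next
      case True
      then have "s' \<noteq> v" using \<open>s \<noteq> s'\<close> by simp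
      have "E s s' = E s' s" using sym by blast
      also have "\<dots> = E t1 s" if "s' \<noteq> t1" using step[of s' s t1] that True \<open>s' \<in> T\<close> vT t1 \<open>s \<noteq> s'\<close> by blast
      show ?thesis
      proof (cases "s' = t1")
        case True2: True then show ?thesis using True c_def by simp
      next
        case False
        have "E s s' = E s' s" using sym by blast
        also have "\<dots> = E t1 s" using step[of s' s t1] False True \<open>s' \<in> T\<close> vT t1 \<open>s \<noteq> s'\<close> by blast
        also have "\<dots> = E v t1" using True sym by blast
        finally show ?thesis using c_def by simp
      qed
    qed
  qed
  have ca: "E x t = a \<and> E t x = a" if "t \<in> T" for t
  proof -
    have "E t x = E v x" using H[of t v x] that vT xV by blast
    then show ?thesis using sym a_def by blast
  qed
  have cb: "E y t = b \<and> E t y = b" if "t \<in> T" for t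
  proof -
    have "E t y = E v y" using H[of t v y] that vT xV by blast
    then show ?thesis using sym b_def by blast
  qed
  have S: "struct V E x y c a b e"
    unfolding struct_def Teq using xV xy cc ca cb e_def sym irr supp by blast
  have n1: "\<not>(a = c \<and> e = b)"
  proof
    assume A: "a = c \<and> e = b"
    have "twins V E x v"
      unfolding twins_iff[of E x v V, OF irr irr]
    proof (intro ballI impI)
      fix z assume z: "z \<in> V" "z \<noteq> x \<and> z \<noteq> v"
      show "E x z \<longleftrightarrow> E v z"
      proof (cases "z = y")
        case True then show ?thesis using A e_def b_def sym by blast
      next
        case False
        then have "z \<in> T" using z Teq by blast
        then show ?thesis using ca cc[of v z] vT z A by auto
      qed
    qed
    then have "x \<in> T" using xV unfolding T_def twin_class_def by simp
    then show False using xV by simp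
  qed
  have n2: "\<not>(b = c \<and> e = a)"
  proof
    assume A: "b = c \<and> e = a"
    have "twins V E y v"
      unfolding twins_iff[of E y v V, OF irr irr]
    proof (intro ballI impI)
      fix z assume z: "z \<in> V" "z \<noteq> y \<and> z \<noteq> v"
      show "E y z \<longleftrightarrow> E v z"
      proof (cases "z = x")
        case True then show ?thesis using A e_def a_def sym by blast
      next
        case False
        then have "z \<in> T" using z Teq by blast
        then show ?thesis using cb cc[of v z] vT z A by auto
      qed
    qed
    then have "y \<in> T" using xV unfolding T_def twin_class_def by simp
    then show False using xV by simp
  qed
  have ab: "a \<or> b"
  proof (rule ccontr)
    assume A: "\<not> (a \<or> b)"
    have "E\<^sup>*\<^sup>* v z \<Longrightarrow> z \<in> T" for z
    proof (induction rule: rtranclp_induct)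
      case base then show ?case by (rule vT)
    next
      case (step z w)
      have "w \<in> V" using supp step(2) by blast
      moreover have "w \<noteq> x" using step ca A by blast
      moreover have "w \<noteq> y" using step cb A by blast
      ultimately show ?case using Teq by blast
    qed
    then show False using conn[OF vV xV(1)] xV by blast
  qed
  have iso_x: False if "\<And>w. \<not> E x w"
  proof -
    have "E\<^sup>*\<^sup>* x v" using conn[OF xV(1) vV] .
    then show False
    proof (cases rule: converse_rtranclpE)
      case base then show ?thesis using xV vT by simp
    next
      case (step w) then show ?thesis using that by blast
    qed
  qed
  have iso_y: False if "\<And>w. \<not> E y w"
  proof -
    have "E\<^sup>*\<^sup>* y v" using conn[OF xV(3) vV] .
    then show False
    proof (cases rule: converse_rtranclpE)
      case base then show ?thesis using xV vT by simp
    next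
      case (step w) then show ?thesis using that by blast
    qed
  qed
  have ae: "a \<or> e"
  proof (rule ccontr)
    assume A: "\<not> (a \<or> e)"
    have "\<not> E x w" for w
    proof
      assume Ew: "E x w"
      then have "w \<in> V" using supp by blast
      then have "w = x \<or> w = y \<or> w \<in> T" using Teq by blast
      then show False using Ew irr ca A e_def by blast
    qed
    then show False using iso_x by blast
  qed
  have be: "b \<or> e"
  proof (rule ccontr)
    assume A: "\<not> (b \<or> e)"
    have "\<not> E y w" for w
    proof
      assume Ew: "E y w"
      then have "w \<in> V" using supp by blast
      then have "w = x \<or> w = y \<or> w \<in> T" using Teq by blast
      then show False using Ew irr cb A e_def sym by blast
    qed
    then show False using iso_y by blast
  qed
  show ?thesis using S n1 n2 ab ae be by blast
qed


theorem proposition5: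
  fixes V :: "'a set" and E :: "'a \<Rightarrow> 'a \<Rightarrow> bool" and n :: nat
  assumes "connected_graph V E" and "card V = n" and "n \<ge> 4"
  shows "twin_number V E = n - 2 \<longleftrightarrow>
    (graph_iso V E {0..<n} (complete_split n) \<or>
     graph_iso V E {0..<n} (k1_join_k1_plus_k n) \<or>
     graph_iso V E {0..<n} (complete_bip_2 n) \<or>
     graph_iso V E {0..<n} (empty_join_k2 n))"
proof
  have G: "simple_graph V E" using assms(1) unfolding connected_graph_def by blast
  have fin: "finite V" using G unfolding simple_graph_def by blast
  have n2: "n \<ge> 2" using assms(3) by simp
  have cd: "card V = card {0..<n}" using assms(2) by simp
  {
    assume "twin_number V E = n - 2"
    from char[OF assms(1,2,3) this] obtain x y c a b e where
      S: "struct V E x y c a b e" and k1: "\<not>(a = c \<and> e = b)" and k2: "\<not>(b = c \<and> e = a)"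
      and k3: "a \<or> b" "a \<or> e" "b \<or> e" by blast
    have "(c \<and> a \<and> b \<and> \<not>e) \<or> (c \<and> a \<and> \<not>b \<and> e) \<or> (c \<and> \<not>a \<and> b \<and> e)
      \<or> (\<not>c \<and> a \<and> b \<and> \<not>e) \<or> (\<not>c \<and> a \<and> b \<and> e)"
      using k1 k2 k3 by (cases a; cases b; cases c; cases e) auto
    then show "graph_iso V E {0..<n} (complete_split n) \<or>
     graph_iso V E {0..<n} (k1_join_k1_plus_k n) \<or>
     graph_iso V E {0..<n} (complete_bip_2 n) \<or>
     graph_iso V E {0..<n} (empty_join_k2 n)"
    proof (elim disjE conjE)
      assume "c" "a" "b" "\<not> e"
      then have "struct V E x y True True True False" using S by simp
      then show ?thesis using struct_iso[OF _ m1[OF n2] fin _ cd] by blast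
    next
      assume "c" "a" "\<not> b" "e"
      then have "struct V E x y True True False True" using S by simp
      then show ?thesis using struct_iso[OF _ m2[OF n2] fin _ cd] by blast
    next
      assume "c" "\<not> a" "b" "e"
      then have "struct V E y x True True False True" using struct_swap[OF S] by simp
      then show ?thesis using struct_iso[OF _ m2[OF n2] fin _ cd] by blast
    next
      assume "\<not> c" "a" "b" "\<not> e"
      then have "struct V E x y False True True False" using S by simp
      then show ?thesis using struct_iso[OF _ m3[OF n2] fin _ cd] by blast
    next
      assume "\<not> c" "a" "b" "e"
      then have "struct V E x y False True True True" using S by simp
      then show ?thesis using struct_iso[OF _ m4[OF n2] fin _ cd] by blast
    qed
  }
  {
    assume A: "graph_iso V E {0..<n} (complete_split n) \<or>
     graph_iso V E {0..<n} (k1_join_k1_plus_k n) \<or>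
     graph_iso V E {0..<n} (complete_bip_2 n) \<or>
     graph_iso V E {0..<n} (empty_join_k2 n)"
    have c4: "card V \<ge> 4" using assms(2,3) by simp
    from A show "twin_number V E = n - 2"
    proof (elim disjE)
      assume "graph_iso V E {0..<n} (complete_split n)"
      from struct_transfer[OF this m1[OF n2] G] obtain x y where "struct V E x y True True True False" by blast
      from struct_twin_number[OF this fin c4] assms(2) show ?thesis by simp
    next
      assume "graph_iso V E {0..<n} (k1_join_k1_plus_k n)"
      from struct_transfer[OF this m2[OF n2] G] obtain x y where "struct V E x y True True False True" by blast
      from struct_twin_number[OF this fin c4] assms(2) show ?thesis by simp
    next
      assume "graph_iso V E {0..<n} (complete_bip_2 n)"
      from struct_transfer[OF this m3[OF n2] G] obtain x y where "struct V E x y False True True False" by blast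
      from struct_twin_number[OF this fin c4] assms(2) show ?thesis by simp
    next
      assume "graph_iso V E {0..<n} (empty_join_k2 n)"
      from struct_transfer[OF this m4[OF n2] G] obtain x y where "struct V E x y False True True True" by blast
      from struct_twin_number[OF this fin c4] assms(2) show ?thesis by simp
    qed
  }
qed

end
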